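(* The matrix $U_3=\frac{1}{\sqrt3}\left(I_2^{\otimes 3}+i\,\sigma_1^{\otimes 3}+i\,\sigma_3^{\otimes 3}\right)$ on $\mathbb{C}^2\otimes\mathbb{C}^2\otimes\mathbb{C}^2$ is unitary and $\mathrm{sr}(U_3)=3$.
   Context: $I_2$ is the $2\times2$ identity, $\sigma_1=\begin{bmatrix}0&1\\1&0\end{bmatrix}$, $\sigma_3=\begin{bmatrix}1&0\\0&-1\end{bmatrix}$. For a matrix $U$ on $\mathbb{C}^2\otimes\mathbb{C}^2\otimes\mathbb{C}^2$ (systems $A,B,C$), its Schmidt rank $\mathrm{sr}(U)$ is the least integer $r$ such that $U=\sum_{j=1}^r A_j\otimes B_j\otimes C_j$ with $A_j,B_j,C_j$ complex $2\times 2$ matrices (i.e. the tensor rank of $U$). *)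

theory Defs
  imports "HOL-Analysis.Analysis"
begin

type_synonym mat2 = "complex^2^2"
type_synonym idx3 = "2 \<times> 2 \<times> 2"
type_synonym mat8 = "complex^idx3^idx3"

definition Id2 :: mat2 where
  "Id2 = (\<chi> i j. if i = j then 1 else 0)"

definition sigma1 :: mat2 where
  "sigma1 = (\<chi> i j. if i = j then 0 else 1)"

definition sigma3 :: mat2 where
  "sigma3 = (\<chi> i j. if i = j then (if i = 0 then 1 else -1) else 0)"

definition kron3 :: "mat2 \<Rightarrow> mat2 \<Rightarrow> mat2 \<Rightarrow> mat8" where
  "kron3 A B C = (\<chi> i j. case i of (i1,i2,i3) \<Rightarrow> case j of (j1,j2,j3) \<Rightarrow>
      A $ i1 $ j1 * B $ i2 $ j2 * C $ i3 $ j3)"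

definition adjoint8 :: "mat8 \<Rightarrow> mat8" where
  "adjoint8 U = (\<chi> i j. cnj (U $ j $ i))"

definition unitary8 :: "mat8 \<Rightarrow> bool" where
  "unitary8 U \<longleftrightarrow> U ** adjoint8 U = mat 1 \<and> adjoint8 U ** U = mat 1"

definition schmidt_rank :: "mat8 \<Rightarrow> nat" where
  "schmidt_rank U = (LEAST r. \<exists>A B C :: nat \<Rightarrow> mat2.
      U = (\<Sum>j<r. kron3 (A j) (B j) (C j)))"

definition U3 :: mat8 where
  "U3 = (\<chi> i j. (kron3 Id2 Id2 Id2 $ i $ j + \<i> * kron3 sigma1 sigma1 sigma1 $ i $ j
                 + \<i> * kron3 sigma3 sigma3 sigma3 $ i $ j) / complex_of_real (sqrt 3))"

end

theory Submission
  imports Defs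
begin

lemma sum3: "sum f (UNIV::idx3 set) = (\<Sum>a\<in>UNIV. \<Sum>b\<in>UNIV. \<Sum>c\<in>UNIV. f (a,b,c))"
proof -
  have "sum f (UNIV::idx3 set) = sum f (UNIV \<times> (UNIV \<times> UNIV))" by (simp only: UNIV_Times_UNIV)
  also have "\<dots> = (\<Sum>a\<in>UNIV. \<Sum>p\<in>UNIV \<times> UNIV. f (a,p))" by (simp only: sum.cartesian_product case_prod_eta)
  also have "\<dots> = (\<Sum>a\<in>UNIV. \<Sum>b\<in>UNIV. \<Sum>c\<in>UNIV. f (a,b,c))"
    by (rule sum.cong[OF refl]) (simp only: sum.cartesian_product, rule sum.cong[OF refl], simp add: split_beta)
  finally show ?thesis .
qed
lemma kron_mult: "kron3 A B C ** kron3 A' B' C' = kron3 (A**A') (B**B') (C**C')"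
proof -
  have "(kron3 A B C ** kron3 A' B' C') $ (i1,i2,i3) $ (j1,j2,j3) = kron3 (A**A') (B**B') (C**C') $ (i1,i2,i3) $ (j1,j2,j3)" for i1 i2 i3 j1 j2 j3
  proof -
    have "(kron3 A B C ** kron3 A' B' C') $ (i1,i2,i3) $ (j1,j2,j3) =
      (\<Sum>a\<in>UNIV. \<Sum>b\<in>UNIV. \<Sum>c\<in>UNIV. (A$i1$a * A'$a$j1) * ((B$i2$b * B'$b$j2) * (C$i3$c * C'$c$j3)))"
      unfolding matrix_matrix_mult_def kron3_def
      apply (simp only: vec_lambda_beta sum3 prod.case)
      apply (intro sum.cong refl)
      by (simp only: mult_ac)
    also have "\<dots> = (\<Sum>a\<in>UNIV. A$i1$a * A'$a$j1) * ((\<Sum>b\<in>UNIV. B$i2$b * B'$b$j2) * (\<Sum>c\<in>UNIV. C$i3$c * C'$c$j3))"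
      by (simp only: sum_distrib_right, simp only: sum_distrib_left)
    finally show ?thesis unfolding matrix_matrix_mult_def kron3_def by (simp only: vec_lambda_beta prod.case mult.assoc)
  qed
  note H = this
  show ?thesis unfolding vec_eq_iff
  proof (intro allI)
    fix i j :: idx3
    obtain i1 i2 i3 where "i = (i1,i2,i3)" by (cases i) auto
    moreover obtain j1 j2 j3 where "j = (j1,j2,j3)" by (cases j) auto
    ultimately show "(kron3 A B C ** kron3 A' B' C') $ i $ j = kron3 (A**A') (B**B') (C**C') $ i $ j"
      using H by (simp only:)
  qed
qed

definition sm :: "complex \<Rightarrow> mat8 \<Rightarrow> mat8" where "sm c M = (\<chi> i j. c * M$i$j)"
lemma sm_l: "sm c M ** N = sm c (M ** N)"
  by (simp add: vec_eq_iff sm_def matrix_matrix_mult_def sum_distrib_left mult.assoc)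
lemma sm_r: "M ** sm c N = sm c (M ** N)"
  by (simp add: vec_eq_iff sm_def matrix_matrix_mult_def sum_distrib_left algebra_simps)
lemma sm_add: "sm c (M + N) = sm c M + sm c N"
  by (simp add: vec_eq_iff sm_def algebra_simps)
lemma sm_sm: "sm c (sm d M) = sm (c*d) M"
  by (simp add: vec_eq_iff sm_def algebra_simps)

lemma P11: "Id2 ** Id2 = Id2" "sigma1 ** sigma1 = Id2" "sigma3 ** sigma3 = Id2"
  "Id2 ** sigma1 = sigma1" "Id2 ** sigma3 = sigma3" "sigma1 ** Id2 = sigma1" "sigma3 ** Id2 = sigma3"
  by (simp_all add: vec_eq_iff forall_2 matrix_matrix_mult_def sum_2 Id2_def sigma1_def sigma3_def)

lemma U3_eq: "U3 = sm (1/complex_of_real (sqrt 3)) (kron3 Id2 Id2 Id2 + sm \<i> (kron3 sigma1 sigma1 sigma1) + sm \<i> (kron3 sigma3 sigma3 sigma3))"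
  by (simp add: vec_eq_iff U3_def sm_def)

lemma herm: "cnj (Id2 $ j $ i) = Id2 $ i $ j" "cnj (sigma1 $ j $ i) = sigma1 $ i $ j" "cnj (sigma3 $ j $ i) = sigma3 $ i $ j"
  by (auto simp: Id2_def sigma1_def sigma3_def)

lemma kherm: assumes "\<And>i j. cnj (A $ j $ i) = A $ i $ j" "\<And>i j. cnj (B $ j $ i) = B $ i $ j" "\<And>i j. cnj (C $ j $ i) = C $ i $ j"
  shows "cnj (kron3 A B C $ j $ i) = kron3 A B C $ i $ j"
  using assms by (cases i; cases j; simp add: kron3_def)

lemma adjU3: "adjoint8 U3 = sm (1/complex_of_real (sqrt 3)) (kron3 Id2 Id2 Id2 + sm (-\<i>) (kron3 sigma1 sigma1 sigma1) + sm (-\<i>) (kron3 sigma3 sigma3 sigma3))"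
  by (simp add: vec_eq_iff U3_def sm_def adjoint8_def kherm herm)

lemma sq: "complex_of_real (sqrt 3) * complex_of_real (sqrt 3) = 3"
proof -
  have "sqrt 3 * sqrt 3 = (3::real)" by simp
  then have "complex_of_real (sqrt 3 * sqrt 3) = 3" by simp
  then show ?thesis by (simp only: of_real_mult)
qed
lemma s3: "(1/complex_of_real (sqrt 3)) * (1/complex_of_real (sqrt 3)) = 1/3"
  using sq by (simp add: field_simps)

lemma madd_r: "(B + C) ** A = (B ** A) + (C ** A)"
  by (simp add: vec_eq_iff matrix_matrix_mult_def sum.distrib[symmetric] algebra_simps)

lemma allidx: "(\<forall>i::idx3. P i) \<longleftrightarrow> (\<forall>a b c. P (a,b,c))" by auto

lemma ZX: "sigma3 ** sigma1 = -(sigma1 ** sigma3)"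
  by (simp add: vec_eq_iff forall_2 matrix_matrix_mult_def sum_2 sigma1_def sigma3_def)
lemma kneg: "kron3 (-A) (-B) (-C) = -(kron3 A B C)"
  by (simp add: vec_eq_iff kron3_def split: prod.splits)
lemma K1: "kron3 Id2 Id2 Id2 = mat 1"
  by (simp add: vec_eq_iff allidx kron3_def mat_def Id2_def)
lemma R1: fixes s m x y z :: complex assumes "s* s = 1/3"
  shows "s*(s*(m + \<i>*x + \<i>*z) + -\<i>* s*(x + \<i>*m + \<i>*-y) + -\<i>* s*(z + \<i>*y + \<i>*m)) = m"
proof -
  have "s*(s*(m + \<i>*x + \<i>*z) + -\<i>* s*(x + \<i>*m + \<i>*-y) + -\<i>* s*(z + \<i>*y + \<i>*m)) = 3*(s* s)*m"
    by (simp add: algebra_simps)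
  then show ?thesis using assms by simp
qed
lemma R2: fixes s m x y z :: complex assumes "s* s = 1/3"
  shows "s*(s*(m + -\<i>*x + -\<i>*z) + \<i>* s*(x + -\<i>*m + -\<i>*-y) + \<i>* s*(z + -\<i>*y + -\<i>*m)) = m"
proof -
  have "s*(s*(m + -\<i>*x + -\<i>*z) + \<i>* s*(x + -\<i>*m + -\<i>*-y) + \<i>* s*(z + -\<i>*y + -\<i>*m)) = 3*(s* s)*m"
    by (simp add: algebra_simps)
  then show ?thesis using assms by simp
qed
lemma unit1: "U3 ** adjoint8 U3 = mat 1"
  apply (subst adjU3, subst U3_eq)
  apply (simp only: matrix_add_ldistrib madd_r sm_l sm_r sm_sm kron_mult P11 ZX kneg K1 matrix_mul_lid matrix_mul_rid)
  apply (simp only: vec_eq_iff sm_def vec_lambda_beta vector_add_component vector_uminus_component)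
  apply (intro allI)
  apply (rule R1[OF s3])
  done
lemma unit2: "adjoint8 U3 ** U3 = mat 1"
  apply (subst adjU3, subst U3_eq)
  apply (simp only: matrix_add_ldistrib madd_r sm_l sm_r sm_sm kron_mult P11 ZX kneg K1 matrix_mul_lid matrix_mul_rid)
  apply (simp only: vec_eq_iff sm_def vec_lambda_beta vector_add_component vector_uminus_component)
  apply (intro allI)
  apply (rule R2[OF s3])
  done


lemma key:
  fixes a1 a2 a3 b1 b2 b3 u1 u2 u3 w1 w2 w3 t :: complex
  assumes "a1*u1 + b1*w1 = t*(1+\<i>)" "a1*u2 + b1*w2 = t*(1-\<i>)" "a1*u3 + b1*w3 = 0"
   "a2*u1 + b2*w1 = t*(1-\<i>)" "a2*u2 + b2*w2 = t*(1+\<i>)" "a2*u3 + b2*w3 = 0"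
   "a3*u1 + b3*w1 = 0" "a3*u2 + b3*w2 = 0" "a3*u3 + b3*w3 = t*\<i>"
   and "t \<noteq> 0"
  shows False
proof -
  define D :: "complex\<Rightarrow>complex\<Rightarrow>complex\<Rightarrow>complex\<Rightarrow>complex\<Rightarrow>complex\<Rightarrow>complex\<Rightarrow>complex\<Rightarrow>complex\<Rightarrow>complex"
    where "D = (\<lambda>m11 m12 m13 m21 m22 m23 m31 m32 m33. m11*(m22*m33 - m23*m32) - m12*(m21*m33 - m23*m31) + m13*(m21*m32 - m22*m31))"
  have "D (a1*u1 + b1*w1) (a1*u2 + b1*w2) (a1*u3 + b1*w3) (a2*u1 + b2*w1) (a2*u2 + b2*w2) (a2*u3 + b2*w3)
     (a3*u1 + b3*w1) (a3*u2 + b3*w2) (a3*u3 + b3*w3) = 0"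
    unfolding D_def by algebra
  then have "D (t*(1+\<i>)) (t*(1-\<i>)) 0 (t*(1-\<i>)) (t*(1+\<i>)) 0 0 0 (t*\<i>) = 0"
    by (simp only: assms(1-9))
  then have "t^3 * (-4) = 0" unfolding D_def by (simp add: algebra_simps power3_eq_cube)
  then show False using assms(10) by simp
qed

lemma lower:
  fixes r :: nat
  assumes U: "U3 = (\<Sum>j<r. kron3 (A j) (B j) (C j))" and r: "r < 3"
  shows False
proof -
  define t where "t = 1 / complex_of_real (sqrt 3)"
  have t0: "t \<noteq> 0" unfolding t_def by simp
  have E: "\<And>p q. U3 $ p $ q = (\<Sum>j<r. kron3 (A j) (B j) (C j) $ p $ q)" by (simp only: U sum_component)
  have pad: "\<And>f::nat\<Rightarrow>complex. (\<Sum>j<r. f j) = (if 0<r then f 0 else 0) + (if 1<r then f 1 else 0)"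
  proof -
    fix f :: "nat \<Rightarrow> complex"
    have "r = 0 \<or> r = 1 \<or> r = 2" using r by auto
    then show "(\<Sum>j<r. f j) = (if 0<r then f 0 else 0) + (if 1<r then f 1 else 0)"
      by (auto simp: numeral_2_eq_2 lessThan_Suc)
  qed
  have F: "\<And>p1 p2 p3 q1 q2 q3. U3 $ (p1,p2,p3) $ (q1,q2,q3) =
     (if 0<r then A 0 $ p1 $ q1 else 0) * (B 0 $ p2 $ q2 * C 0 $ p3 $ q3) +
     (if 1<r then A 1 $ p1 $ q1 else 0) * (B 1 $ p2 $ q2 * C 1 $ p3 $ q3)"
    unfolding E pad by (simp add: kron3_def mult.assoc)
  have V: "U3 $ (0,0,0) $ (0,0,0) = t*(1+\<i>)" "U3 $ (0,0,1) $ (0,0,1) = t*(1-\<i>)"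
    "U3 $ (0,0,0) $ (0,1,1) = 0"
    "U3 $ (1,0,0) $ (1,0,0) = t*(1-\<i>)" "U3 $ (1,0,1) $ (1,0,1) = t*(1+\<i>)"
    "U3 $ (1,0,0) $ (1,1,1) = 0"
    "U3 $ (0,0,0) $ (1,0,0) = 0" "U3 $ (0,0,1) $ (1,0,1) = 0"
    "U3 $ (0,0,0) $ (1,1,1) = t*\<i>"
    by (simp_all add: U3_def kron3_def Id2_def sigma1_def sigma3_def t_def field_simps)
  show False
    apply (rule key[where t=t, OF _ _ _ _ _ _ _ _ _ t0])
    apply (subst V(1)[symmetric], subst F, rule refl)
    apply (subst V(2)[symmetric], subst F, rule refl)
    apply (subst V(3)[symmetric], subst F, rule refl)
    apply (subst V(4)[symmetric], subst F, rule refl)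
    apply (subst V(5)[symmetric], subst F, rule refl)
    apply (subst V(6)[symmetric], subst F, rule refl)
    apply (subst V(7)[symmetric], subst F, rule refl)
    apply (subst V(8)[symmetric], subst F, rule refl)
    apply (subst V(9)[symmetric], subst F, rule refl)
    done
qed

lemma upper: "U3 = (\<Sum>j<3. kron3 ((\<lambda>j::nat. \<chi> a b. (if j = 0 then 1 / complex_of_real (sqrt 3) else \<i> / complex_of_real (sqrt 3)) *
        (if j = 0 then Id2 else if j = 1 then sigma1 else sigma3) $ a $ b) j)
     ((\<lambda>j. if j = 0 then Id2 else if j = 1 then sigma1 else sigma3) j)
     ((\<lambda>j. if j = 0 then Id2 else if j = 1 then sigma1 else sigma3) j))"
  by (simp add: vec_eq_iff allidx numeral_3_eq_3 lessThan_Suc U3_def kron3_def forall_2 Id2_def sigma1_def sigma3_def field_simps)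

lemma rank: "schmidt_rank U3 = 3"
  unfolding schmidt_rank_def
proof (rule Least_equality)
  show "\<exists>A B C. U3 = (\<Sum>j::nat<3. kron3 (A j) (B j) (C j))" by (rule exI, rule exI, rule exI, rule upper)
next
  fix y :: nat assume "\<exists>A B C. U3 = (\<Sum>j<y. kron3 (A j) (B j) (C j))"
  then obtain A B C where U: "U3 = (\<Sum>j<y. kron3 (A j) (B j) (C j))" by blast
  show "3 \<le> y"
  proof (rule ccontr)
    assume "\<not> 3 \<le> y"
    then have "y < 3" by simp
    then show False by (rule lower[OF U])
  qed
qed

lemma t1: "unitary8 U3" unfolding unitary8_def using unit1 unit2 by simp
theorem mainTheorem3:
  shows "unitary8 U3 \<and> schmidt_rank U3 = 3"
  by (rule conjI[OF t1 rank])

end
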